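(* Let $P$ be a partial order on a finite set $V$. If $A$ is an antichain of $P$, then $e(P)\ge\sum_{v\in A}e(P\setminus v)$. If $S$ is a cutset of $P$, then $e(P)\le\sum_{v\in S}e(P\setminus v)$. Moreover, if $I\subseteq V$ is either a cutset or an antichain of $P$, then $e(P)=\sum_{v\in I}e(P\setminus v)$ if and only if $I$ is both a cutset and an antichain of $P$.
   Context: $e(Q)$ denotes the number of linear extensions of a finite poset $Q$, where a linear extension of a poset on an $m$-element set is an order-preserving bijection onto $[m]$ (strict order goes to strict order); the empty poset has one linear extension. $P\setminus v$ denotes the subposet of $P$ induced on $V\setminus\{v\}$. A cutset of $P$ is a subset of $V$ that intersects every maximal chain of $P$. *)

theory Defs
  imports Main "HOL-Library.FuncSet"
begin

definition linext :: "'a set \<Rightarrow> 'a rel \<Rightarrow> ('a \<Rightarrow> nat) set" where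
  "linext V r = {f \<in> V \<rightarrow>\<^sub>E {1..card V}. bij_betw f V {1..card V} \<and>
      (\<forall>x\<in>V. \<forall>y\<in>V. (x, y) \<in> r \<and> x \<noteq> y \<longrightarrow> f x < f y)}"

definition num_linext :: "'a set \<Rightarrow> 'a rel \<Rightarrow> nat" where
  "num_linext V r = card (linext V r)"

definition del_pt :: "'a rel \<Rightarrow> 'a set \<Rightarrow> 'a \<Rightarrow> 'a rel" where
  "del_pt r V v = Restr r (V - {v})"

definition is_chain :: "'a set \<Rightarrow> 'a rel \<Rightarrow> 'a set \<Rightarrow> bool" where
  "is_chain V r C \<longleftrightarrow> C \<subseteq> V \<and> (\<forall>x\<in>C. \<forall>y\<in>C. (x, y) \<in> r \<or> (y, x) \<in> r)"

definition is_maximal_chain :: "'a set \<Rightarrow> 'a rel \<Rightarrow> 'a set \<Rightarrow> bool" where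
  "is_maximal_chain V r C \<longleftrightarrow> is_chain V r C \<and>
     (\<forall>D. is_chain V r D \<and> C \<subseteq> D \<longrightarrow> D = C)"

definition is_antichain :: "'a set \<Rightarrow> 'a rel \<Rightarrow> 'a set \<Rightarrow> bool" where
  "is_antichain V r A \<longleftrightarrow> A \<subseteq> V \<and>
     (\<forall>x\<in>A. \<forall>y\<in>A. x \<noteq> y \<longrightarrow> (x, y) \<notin> r)"

definition is_cutset :: "'a set \<Rightarrow> 'a rel \<Rightarrow> 'a set \<Rightarrow> bool" where
  "is_cutset V r S \<longleftrightarrow> S \<subseteq> V \<and>
     (\<forall>C. is_maximal_chain V r C \<longrightarrow> S \<inter> C \<noteq> {})"

end

theory Submission
  imports Defs
begin


definition Mn :: "'a set \<Rightarrow> 'a rel \<Rightarrow> 'a set" where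
  "Mn W r = {m\<in>W. \<forall>y\<in>W. (y, m) \<in> r \<longrightarrow> y = m}"

lemma bij_helper:
  assumes "finite B" "inj_on f A" "f ` A \<subseteq> B" "card A = card B"
  shows "bij_betw f A B"
  using assms by (metis bij_betw_def card_image card_subset_eq)

lemma linext_empty: "linext {} r = {\<lambda>x. undefined}"
  unfolding linext_def by (auto simp: bij_betw_def)

lemma num_linext_empty: "num_linext {} r = 1"
  by (simp add: num_linext_def linext_empty)

lemma linext_Restr: "linext W (Restr r W) = linext W r"
  unfolding linext_def by auto

lemma slice_card:
  assumes fin: "finite W" and m: "m \<in> Mn W r"
  shows "card {f\<in>linext W r. f m = 1} = card (linext (W - {m}) r)"
proof -
  have mW: "m \<in> W" using m by (simp add: Mn_def)
  define n where "n = card W"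
  have cW': "card (W - {m}) = n - 1" using fin mW by (simp add: n_def)
  have n1: "n \<ge> 1" using fin mW n_def by (metis One_nat_def Suc_leI card_gt_0_iff empty_iff)
  define h where "h = (\<lambda>f::'a\<Rightarrow>nat. \<lambda>x. if x \<in> W - {m} then f x - 1 else undefined)"
  define k where "k = (\<lambda>g::'a\<Rightarrow>nat. \<lambda>x. if x = m then 1 else if x \<in> W - {m} then g x + 1 else undefined)"
  show ?thesis
  proof (rule bij_betw_same_card, rule bij_betw_byWitness[where f'=k])
    show "\<forall>a\<in>{f \<in> linext W r. f m = 1}. k (h a) = a"
    proof
      fix f assume f: "f \<in> {f \<in> linext W r. f m = 1}"
      hence fE: "f \<in> W \<rightarrow>\<^sub>E {1..n}" and fb: "bij_betw f W {1..n}" and fm: "f m = 1"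
        by (auto simp: linext_def n_def)
      have "f x \<ge> 2" if "x \<in> W - {m}" for x
      proof -
        have "f x \<noteq> f m" using fb that mW by (auto simp: bij_betw_def inj_on_def)
        moreover have "f x \<ge> 1" using fE that by auto
        ultimately show ?thesis using fm by auto
      qed
      hence "Suc (f x - Suc 0) = f x" if "x \<in> W - {m}" for x using that by fastforce
      thus "k (h f) = f" using fE fm unfolding k_def h_def
        by (auto simp: fun_eq_iff PiE_def extensional_def)
    qed
    show "\<forall>a'\<in>linext (W - {m}) r. h (k a') = a'"
    proof
      fix g assume "g \<in> linext (W - {m}) r"
      hence "g \<in> (W - {m}) \<rightarrow>\<^sub>E {1..card (W-{m})}" by (simp add: linext_def)
      thus "h (k g) = g" unfolding k_def h_def
        by (auto simp: fun_eq_iff PiE_def extensional_def)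
    qed
    show "h ` {f \<in> linext W r. f m = 1} \<subseteq> linext (W - {m}) r"
    proof
      fix g assume "g \<in> h ` {f \<in> linext W r. f m = 1}"
      then obtain f where f: "f \<in> linext W r" "f m = 1" and g: "g = h f" by auto
      hence fE: "f \<in> W \<rightarrow>\<^sub>E {1..n}" and fb: "bij_betw f W {1..n}" and fm: "f m = 1"
        and fo: "\<forall>x\<in>W. \<forall>y\<in>W. (x, y) \<in> r \<and> x \<noteq> y \<longrightarrow> f x < f y"
        by (auto simp: linext_def n_def)
      have ge2: "f x \<ge> 2" if "x \<in> W - {m}" for x
      proof -
        have "f x \<noteq> f m" using fb that mW by (auto simp: bij_betw_def inj_on_def)
        moreover have "f x \<ge> 1" using fE that by auto
        ultimately show ?thesis using fm by auto
      qed
      have le: "f x \<le> n" if "x \<in> W" for x using fE that by auto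
      have gE: "g \<in> (W - {m}) \<rightarrow>\<^sub>E {1..n-1}"
      proof (rule PiE_I)
        fix x assume x: "x \<in> W - {m}"
        show "g x \<in> {1..n-1}" using ge2[OF x] le[of x] x unfolding g h_def by auto
      next
        fix x assume "x \<notin> W - {m}"
        thus "g x = undefined" unfolding g h_def by auto
      qed
      have ginj: "inj_on g (W - {m})"
      proof (rule inj_onI)
        fix x y assume xy: "x \<in> W - {m}" "y \<in> W - {m}" "g x = g y"
        hence "f x = f y" using ge2[of x] ge2[of y] unfolding g h_def by auto
        thus "x = y" using fb xy by (auto simp: bij_betw_def inj_on_def)
      qed
      have gb: "bij_betw g (W - {m}) {1..n-1}"
        by (rule bij_helper) (use ginj gE cW' in auto)
      have go: "\<forall>x\<in>W-{m}. \<forall>y\<in>W-{m}. (x, y) \<in> r \<and> x \<noteq> y \<longrightarrow> g x < g y"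
      proof (intro ballI impI)
        fix x y assume xy: "x \<in> W-{m}" "y \<in> W-{m}" "(x, y) \<in> r \<and> x \<noteq> y"
        hence "f x < f y" using fo by auto
        thus "g x < g y" using ge2[of x] ge2[of y] xy unfolding g h_def by auto
      qed
      show "g \<in> linext (W - {m}) r" unfolding linext_def using gE gb go cW' by auto
    qed
    show "k ` linext (W - {m}) r \<subseteq> {f \<in> linext W r. f m = 1}"
    proof
      fix f assume "f \<in> k ` linext (W - {m}) r"
      then obtain g where g: "g \<in> linext (W - {m}) r" and f: "f = k g" by auto
      hence gE: "g \<in> (W - {m}) \<rightarrow>\<^sub>E {1..n-1}" and gb: "bij_betw g (W - {m}) {1..n-1}"
        and go: "\<forall>x\<in>W-{m}. \<forall>y\<in>W-{m}. (x, y) \<in> r \<and> x \<noteq> y \<longrightarrow> g x < g y"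
        by (auto simp: linext_def cW')
      have gpos: "g z \<ge> 1" if "z \<in> W - {m}" for z using gE that by (meson PiE_mem atLeastAtMost_iff)
      have fE: "f \<in> W \<rightarrow>\<^sub>E {1..n}"
        using gE n1 mW unfolding f k_def by (auto simp: PiE_def extensional_def Pi_def)
      have finj: "inj_on f W"
      proof (rule inj_onI)
        fix x y assume xy: "x \<in> W" "y \<in> W" "f x = f y"
        show "x = y"
        proof (cases "x = m \<or> y = m")
          case True
          have "g z \<ge> 1" if "z \<in> W - {m}" for z using gE that by (meson PiE_mem atLeastAtMost_iff)
          hence gp: "k g z \<ge> 2" if "z \<in> W - {m}" for z using that unfolding k_def by auto
          have km: "k g m = 1" unfolding k_def by simp
          show ?thesis
          proof (rule ccontr)
            assume "x \<noteq> y"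
            thus False using True xy gp[of x] gp[of y] km unfolding f by auto
          qed
        next
          case False
          hence "g x = g y" using xy unfolding f k_def by auto
          thus ?thesis using gb xy False by (auto simp: bij_betw_def inj_on_def)
        qed
      qed
      have fb: "bij_betw f W {1..n}"
        by (rule bij_helper) (use finj fE n_def in auto)
      have fo: "\<forall>x\<in>W. \<forall>y\<in>W. (x, y) \<in> r \<and> x \<noteq> y \<longrightarrow> f x < f y"
      proof (intro ballI impI)
        fix x y assume xy: "x \<in> W" "y \<in> W" "(x, y) \<in> r \<and> x \<noteq> y"
        show "f x < f y"
        proof (cases "y = m")
          case True thus ?thesis using m xy by (auto simp: Mn_def)
        next
          case False
          show ?thesis
          proof (cases "x = m")
            case True thus ?thesis using False xy gpos[of y] unfolding f k_def by auto
          next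
            case False2: False
            thus ?thesis using False xy go unfolding f k_def by auto
          qed
        qed
      qed
      have "f m = 1" unfolding f k_def by simp
      thus "f \<in> {f \<in> linext W r. f m = 1}" using fE fb fo unfolding linext_def n_def by auto
    qed
  qed
qed

lemma num_linext_rec:
  assumes fin: "finite W" and ne: "W \<noteq> {}"
  shows "num_linext W r = (\<Sum>m\<in>Mn W r. num_linext (W - {m}) r)"
proof -
  have "linext W r = (\<Union>m\<in>Mn W r. {f\<in>linext W r. f m = 1})"
  proof (rule set_eqI, rule iffI)
    fix f assume f: "f \<in> linext W r"
    hence fE: "f \<in> W \<rightarrow>\<^sub>E {1..card W}" and fb: "bij_betw f W {1..card W}"
        and fo: "\<forall>x\<in>W. \<forall>y\<in>W. (x, y) \<in> r \<and> x \<noteq> y \<longrightarrow> f x < f y"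
      by (auto simp: linext_def)
    have "1 \<in> {1..card W}" using fin ne by (simp add: Suc_leI card_gt_0_iff)
    then obtain m where m: "m \<in> W" "f m = 1" using fb by (metis bij_betw_iff_bijections)
    have "m \<in> Mn W r"
    proof -
      have "y = m" if "y \<in> W" "(y, m) \<in> r" for y
      proof (rule ccontr)
        assume "y \<noteq> m"
        hence "f y < f m" using fo that m(1) by blast
        moreover have "f y \<in> {1..card W}" using fE that by (meson PiE_mem)
        ultimately show False using m by auto
      qed
      thus ?thesis using m by (auto simp: Mn_def)
    qed
    thus "f \<in> (\<Union>m\<in>Mn W r. {f\<in>linext W r. f m = 1})" using f m by auto
  qed auto
  hence "num_linext W r = card (\<Union>m\<in>Mn W r. {f\<in>linext W r. f m = 1})"
    by (simp add: num_linext_def)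
  also have "\<dots> = (\<Sum>m\<in>Mn W r. card {f\<in>linext W r. f m = 1})"
  proof (rule card_UN_disjoint)
    show "finite (Mn W r)" using fin by (simp add: Mn_def)
    show "\<forall>i\<in>Mn W r. finite {f \<in> linext W r. f i = 1}"
    proof
      fix i
      have "linext W r \<subseteq> W \<rightarrow>\<^sub>E {1..card W}" by (auto simp: linext_def)
      moreover have "finite (W \<rightarrow>\<^sub>E {1..card W})" using fin by (simp add: finite_PiE)
      ultimately show "finite {f \<in> linext W r. f i = 1}" by (auto intro: finite_subset)
    qed
    show "\<forall>i\<in>Mn W r. \<forall>j\<in>Mn W r. i \<noteq> j \<longrightarrow>
        {f \<in> linext W r. f i = 1} \<inter> {f \<in> linext W r. f j = 1} = {}"
      by (auto simp: Mn_def linext_def bij_betw_def inj_on_def)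
  qed
  also have "\<dots> = (\<Sum>m\<in>Mn W r. num_linext (W - {m}) r)"
    using slice_card[OF fin] by (simp add: num_linext_def)
  finally show ?thesis .
qed



context
  fixes V :: "'a set" and r :: "'a rel"
  assumes fin: "finite V" and po: "partial_order_on V r"
begin

lemma rsub: "(x, y) \<in> r \<Longrightarrow> x \<in> V \<and> y \<in> V"
  using partial_order_onD(4)[OF po] by auto
lemma rrefl: "x \<in> V \<Longrightarrow> (x, x) \<in> r"
  using partial_order_onD(1)[OF po] by (auto simp: refl_on_def)
lemma rtrans: "(x, y) \<in> r \<Longrightarrow> (y, z) \<in> r \<Longrightarrow> (x, z) \<in> r"
  using partial_order_onD(2)[OF po] by (auto dest: transD)
lemma ranti: "(x, y) \<in> r \<Longrightarrow> (y, x) \<in> r \<Longrightarrow> x = y"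
  using partial_order_onD(3)[OF po] by (auto dest: antisymD)

lemma below_min:
  assumes WV: "W \<subseteq> V" and w: "w \<in> W"
  shows "\<exists>m\<in>Mn W r. (m, w) \<in> r"
proof -
  have finW: "finite W" using WV fin finite_subset by auto
  have "\<forall>w. w \<in> W \<longrightarrow> card {z\<in>W. (z, w) \<in> r} = k \<longrightarrow> (\<exists>m\<in>Mn W r. (m, w) \<in> r)" for k
  proof (induction k rule: less_induct)
    case (less k)
    show ?case
    proof (intro allI impI)
      fix w assume w: "w \<in> W" and k: "card {z\<in>W. (z, w) \<in> r} = k"
      show "\<exists>m\<in>Mn W r. (m, w) \<in> r"
      proof (cases "w \<in> Mn W r")
        case True thus ?thesis using rrefl w WV by auto
      next
        case False
        then obtain z where z: "z \<in> W" "(z, w) \<in> r" "z \<noteq> w" using w by (auto simp: Mn_def)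
        have sub: "{y\<in>W. (y, z) \<in> r} \<subset> {y\<in>W. (y, w) \<in> r}"
        proof
          show "{y\<in>W. (y, z) \<in> r} \<subseteq> {y\<in>W. (y, w) \<in> r}" using z rtrans by auto
          have "w \<notin> {y\<in>W. (y, z) \<in> r}" using z ranti by auto
          moreover have "w \<in> {y\<in>W. (y, w) \<in> r}" using w WV rrefl by auto
          ultimately show "{y\<in>W. (y, z) \<in> r} \<noteq> {y\<in>W. (y, w) \<in> r}" by auto
        qed
        have "card {y\<in>W. (y, z) \<in> r} < k" using psubset_card_mono[OF _ sub] finW k by auto
        then obtain m where "m \<in> Mn W r" "(m, z) \<in> r" using less z by blast
        thus ?thesis using z rtrans by blast
      qed
    qed
  qed
  thus ?thesis using w by blast
qed

lemma Mn_ne: "W \<subseteq> V \<Longrightarrow> W \<noteq> {} \<Longrightarrow> Mn W r \<noteq> {}"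
  using below_min by blast

lemma pos: "W \<subseteq> V \<Longrightarrow> num_linext W r \<ge> 1"
proof (induction "card W" arbitrary: W rule: less_induct)
  case less
  have finW: "finite W" using less fin finite_subset by auto
  show ?case
  proof (cases "W = {}")
    case True thus ?thesis by (simp add: num_linext_empty)
  next
    case False
    then obtain m where m: "m \<in> Mn W r" using Mn_ne less by blast
    have "finite (Mn W r)" using finW by (simp add: Mn_def)
    have "1 \<le> num_linext (W - {m}) r"
    proof (rule less(1))
      have "m \<in> W" using m by (simp add: Mn_def)
      thus "card (W - {m}) < card W" by (rule card_Diff1_less[OF finW])
      show "W - {m} \<subseteq> V" using less(2) by auto
    qed
    also have "\<dots> \<le> (\<Sum>m\<in>Mn W r. num_linext (W - {m}) r)"
      using m \<open>finite (Mn W r)\<close> by (intro member_le_sum) auto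
    finally show ?thesis using num_linext_rec[OF finW False] by simp
  qed
qed

definition T :: "'a set \<Rightarrow> 'a set \<Rightarrow> nat" where
  "T W X = (\<Sum>x\<in>X. num_linext (W - {x}) r)"

definition N :: "'a set \<Rightarrow> 'a \<Rightarrow> 'a set" where
  "N W x = Mn (W - {x}) r - Mn W r"

lemma Mn_del: "Mn (W - {x}) r = (Mn W r - {x}) \<union> N W x"
  unfolding N_def Mn_def by auto

lemma N_nonmin: "W \<subseteq> V \<Longrightarrow> x \<notin> Mn W r \<Longrightarrow> N W x = {}"
proof -
  assume WV: "W \<subseteq> V" and x: "x \<notin> Mn W r"
  show ?thesis
  proof (rule ccontr)
    assume "N W x \<noteq> {}"
    then obtain n where n: "n \<in> Mn (W - {x}) r" "n \<notin> Mn W r" by (auto simp: N_def)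
    then obtain z where z: "z \<in> W" "(z, n) \<in> r" "z \<noteq> n" by (auto simp: Mn_def)
    hence zx: "z = x" using n by (auto simp: Mn_def)
    then obtain w where w: "w \<in> W" "(w, x) \<in> r" "w \<noteq> x" using x z by (auto simp: Mn_def)
    have "(w, n) \<in> r" using w z zx rtrans by blast
    moreover have "w \<noteq> n" using w z zx ranti by blast
    ultimately show False using n w by (auto simp: Mn_def)
  qed
qed

lemma N_above: "n \<in> N W x \<Longrightarrow> (x, n) \<in> r \<and> n \<noteq> x \<and> n \<in> W \<and> x \<in> W \<and> n \<in> Mn (W - {x}) r"
  unfolding N_def Mn_def by auto

lemma decomp:
  assumes WV: "W \<subseteq> V" and c2: "card W \<ge> 2" and XW: "X \<subseteq> W"
  shows "T W X = (\<Sum>m\<in>Mn W r. T (W - {m}) (X - {m}) + (if m \<in> X then T (W - {m}) (N W m) else 0))"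
proof -
  have finW: "finite W" using WV fin finite_subset by auto
  have finX: "finite X" using XW finW finite_subset by auto
  have finM: "finite (Mn W r)" using finW by (simp add: Mn_def)
  have finN: "finite (N W x)" for x using finW by (simp add: N_def Mn_def)
  have ne: "W - {x} \<noteq> {}" for x
  proof
    assume "W - {x} = {}"
    hence "W \<subseteq> {x}" by auto
    hence "card W \<le> card {x}" by (rule card_mono[rotated]) simp
    hence "card W \<le> 1" by simp
    thus False using c2 by auto
  qed
  have "T W X = (\<Sum>x\<in>X. \<Sum>m\<in>Mn (W - {x}) r. num_linext (W - {x} - {m}) r)"
    unfolding T_def
  proof (rule sum.cong[OF refl])
    fix x assume "x \<in> X"
    have "finite (W - {x})" using finW by simp
    thus "num_linext (W - {x}) r = (\<Sum>m\<in>Mn (W - {x}) r. num_linext (W - {x} - {m}) r)"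
      by (rule num_linext_rec[OF _ ne])
  qed
  also have "\<dots> = (\<Sum>x\<in>X. (\<Sum>m\<in>Mn W r - {x}. num_linext (W - {x} - {m}) r)
                          + T (W - {x}) (N W x))"
  proof (rule sum.cong[OF refl])
    fix x assume x: "x \<in> X"
    have "(Mn W r - {x}) \<inter> N W x = {}" by (auto simp: N_def)
    thus "(\<Sum>m\<in>Mn (W - {x}) r. num_linext (W - {x} - {m}) r) =
          (\<Sum>m\<in>Mn W r - {x}. num_linext (W - {x} - {m}) r) + T (W - {x}) (N W x)"
      unfolding Mn_del T_def using finM finN by (simp add: sum.union_disjoint)
  qed
  also have "\<dots> = (\<Sum>x\<in>X. \<Sum>m\<in>Mn W r - {x}. num_linext (W - {x} - {m}) r)
                 + (\<Sum>x\<in>X. T (W - {x}) (N W x))"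
    by (simp add: sum.distrib)
  also have "(\<Sum>x\<in>X. \<Sum>m\<in>Mn W r - {x}. num_linext (W - {x} - {m}) r)
           = (\<Sum>m\<in>Mn W r. T (W - {m}) (X - {m}))"
  proof -
    have "(\<Sum>x\<in>X. \<Sum>m\<in>Mn W r - {x}. num_linext (W - {x} - {m}) r)
        = (\<Sum>x\<in>X. \<Sum>m\<in>{m\<in>Mn W r. m \<noteq> x}. num_linext (W - {x} - {m}) r)"
      by (intro sum.cong) auto
    also have "\<dots> = (\<Sum>m\<in>Mn W r. \<Sum>x\<in>{x\<in>X. m \<noteq> x}. num_linext (W - {x} - {m}) r)"
      by (rule sum.swap_restrict[OF finX finM])
    also have "\<dots> = (\<Sum>m\<in>Mn W r. T (W - {m}) (X - {m}))"
      unfolding T_def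
    proof (rule sum.cong[OF refl], rule sum.cong)
      fix m x
      show "{x \<in> X. m \<noteq> x} = X - {m}" by auto
      have "W - {x} - {m} = W - {m} - {x}" by auto
      thus "num_linext (W - {x} - {m}) r = num_linext (W - {m} - {x}) r" by simp
    qed
    finally show ?thesis .
  qed
  also have "(\<Sum>x\<in>X. T (W - {x}) (N W x)) = (\<Sum>m\<in>Mn W r. (if m \<in> X then T (W - {m}) (N W m) else 0))"
  proof -
    have "(\<Sum>x\<in>X. T (W - {x}) (N W x)) = (\<Sum>x\<in>X \<inter> Mn W r. T (W - {x}) (N W x))"
    proof (rule sum.mono_neutral_right[OF finX])
      show "X \<inter> Mn W r \<subseteq> X" by auto
      show "\<forall>i\<in>X - X \<inter> Mn W r. T (W - {i}) (N W i) = 0"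
        using N_nonmin[OF WV] by (auto simp: T_def)
    qed
    also have "\<dots> = (\<Sum>m\<in>Mn W r. (if m \<in> X then T (W - {m}) (N W m) else 0))"
      using finM by (simp add: sum.If_cases Int_commute)
    finally show ?thesis .
  qed
  finally show ?thesis by (simp add: sum.distrib)
qed


lemma chain_bottom:
  assumes "finite C" "C \<noteq> {}" "is_chain W r C"
  shows "\<exists>c\<in>C. \<forall>y\<in>C. (c, y) \<in> r"
  using assms
proof (induction C rule: finite_ne_induct)
  case (singleton x) then show ?case by (auto simp: is_chain_def)
next
  case (insert x F)
  have "is_chain W r F" using insert.prems by (auto simp: is_chain_def)
  then obtain c where c: "c \<in> F" "\<forall>y\<in>F. (c, y) \<in> r" using insert.IH by blast
  have xx: "(x, x) \<in> r" using insert.prems by (auto simp: is_chain_def)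
  show ?case
  proof (cases "(x, c) \<in> r")
    case True thus ?thesis using c xx rtrans by blast
  next
    case False
    hence "(c, x) \<in> r" using insert.prems c by (auto simp: is_chain_def)
    thus ?thesis using c by auto
  qed
qed

lemma mc_bottom_min:
  assumes WV: "W \<subseteq> V" and C: "is_maximal_chain W r C" and c: "c \<in> C" "\<forall>y\<in>C. (c, y) \<in> r"
  shows "c \<in> Mn W r"
proof -
  have CW: "C \<subseteq> W" and ch: "is_chain W r C" using C by (auto simp: is_maximal_chain_def is_chain_def)
  have "z = c" if z: "z \<in> W" "(z, c) \<in> r" for z
  proof -
    have "is_chain W r (insert z C)"
      unfolding is_chain_def
    proof (intro conjI ballI)
      show "insert z C \<subseteq> W" using CW z by auto
      fix a b assume ab: "a \<in> insert z C" "b \<in> insert z C"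
      show "(a, b) \<in> r \<or> (b, a) \<in> r"
      proof (cases "a = z")
        case True
        show ?thesis
        proof (cases "b = z")
          case True thus ?thesis using \<open>a = z\<close> rrefl z WV by auto
        next
          case False thus ?thesis using ab \<open>a = z\<close> c z rtrans by auto
        qed
      next
        case False
        show ?thesis
        proof (cases "b = z")
          case True thus ?thesis using ab False c z rtrans by auto
        next
          case False2: False thus ?thesis using ab False ch by (auto simp: is_chain_def)
        qed
      qed
    qed
    hence "insert z C = C" using C by (auto simp: is_maximal_chain_def)
    hence "z \<in> C" by auto
    thus "z = c" using c z ranti by blast
  qed
  thus ?thesis using c CW by (auto simp: Mn_def)
qed

lemma mc_finite: "W \<subseteq> V \<Longrightarrow> is_maximal_chain W r C \<Longrightarrow> finite C"
  using fin by (auto simp: is_maximal_chain_def is_chain_def intro: finite_subset)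

lemma mc_ne:
  assumes WV: "W \<subseteq> V" and ne: "W \<noteq> {}" and C: "is_maximal_chain W r C"
  shows "C \<noteq> {}"
proof
  assume e: "C = {}"
  obtain w where w: "w \<in> W" using ne by auto
  have "is_chain W r {w}" using w WV rrefl by (auto simp: is_chain_def)
  hence "{w} = C" using C e by (auto simp: is_maximal_chain_def)
  thus False using e by auto
qed

lemma mc_bottom:
  assumes WV: "W \<subseteq> V" and ne: "W \<noteq> {}" and C: "is_maximal_chain W r C"
  shows "\<exists>c\<in>C. (\<forall>y\<in>C. (c, y) \<in> r) \<and> c \<in> Mn W r"
proof -
  have "is_chain W r C" using C by (simp add: is_maximal_chain_def)
  then obtain c where "c \<in> C" "\<forall>y\<in>C. (c, y) \<in> r"
    using chain_bottom mc_finite[OF WV C] mc_ne[OF WV ne C] by blast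
  thus ?thesis using mc_bottom_min[OF WV C] by blast
qed

lemma mcD: "is_maximal_chain W r C \<Longrightarrow> is_chain W r C"
  by (simp add: is_maximal_chain_def)
lemma mcE: "is_maximal_chain W r C \<Longrightarrow> is_chain W r E \<Longrightarrow> C \<subseteq> E \<Longrightarrow> E = C"
  by (simp add: is_maximal_chain_def)
lemma mcI: "is_chain W r C \<Longrightarrow> (\<And>E. is_chain W r E \<Longrightarrow> C \<subseteq> E \<Longrightarrow> E = C) \<Longrightarrow> is_maximal_chain W r C"
  by (auto simp: is_maximal_chain_def)
lemma chD: "is_chain W r C \<Longrightarrow> C \<subseteq> W"
  by (simp add: is_chain_def)
lemma chD2: "is_chain W r C \<Longrightarrow> a \<in> C \<Longrightarrow> b \<in> C \<Longrightarrow> (a, b) \<in> r \<or> (b, a) \<in> r"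
  by (simp add: is_chain_def)
lemma chI: "C \<subseteq> W \<Longrightarrow> (\<And>a b. a \<in> C \<Longrightarrow> b \<in> C \<Longrightarrow> (a, b) \<in> r \<or> (b, a) \<in> r) \<Longrightarrow> is_chain W r C"
  by (simp add: is_chain_def)

lemma lift:
  assumes WV: "W \<subseteq> V" and x: "x \<in> Mn W r" and D: "is_maximal_chain (W - {x}) r D"
    and d: "d \<in> D" "\<forall>y\<in>D. (d, y) \<in> r"
  shows "(d \<in> Mn W r \<and> is_maximal_chain W r D) \<or> (d \<in> N W x \<and> is_maximal_chain W r (insert x D))"
proof -
  have WV': "W - {x} \<subseteq> V" using WV by blast
  have dm: "d \<in> Mn (W - {x}) r" by (rule mc_bottom_min[OF WV' D d])
  have chDD: "is_chain (W - {x}) r D" using D by (rule mcD)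
  have DW: "D \<subseteq> W - {x}" using chDD by (rule chD)
  have xW: "x \<in> W" using x by (simp add: Mn_def)
  have dW: "d \<in> W" "d \<noteq> x" using DW d by auto
  show ?thesis
  proof (cases "d \<in> Mn W r")
    case True
    have "is_maximal_chain W r D"
    proof (rule mcI)
      show "is_chain W r D" using DW chD2[OF chDD] by (intro chI) auto
      fix E assume E: "is_chain W r E" "D \<subseteq> E"
      have "x \<notin> E"
      proof
        assume "x \<in> E"
        hence "(x, d) \<in> r \<or> (d, x) \<in> r" using E d chD2 by blast
        moreover have "\<forall>y\<in>W. (y, d) \<in> r \<longrightarrow> y = d" using True by (simp add: Mn_def)
        moreover have "\<forall>y\<in>W. (y, x) \<in> r \<longrightarrow> y = x" using x by (simp add: Mn_def)
        ultimately show False using xW dW by blast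
      qed
      have "E \<subseteq> W" using E(1) by (rule chD)
      hence "is_chain (W - {x}) r E" using \<open>x \<notin> E\<close> chD2[OF E(1)] by (intro chI) auto
      thus "E = D" using mcE[OF D] E(2) by blast
    qed
    thus ?thesis using True by blast
  next
    case False
    hence dN: "d \<in> N W x" using dm by (simp add: N_def)
    have xd: "(x, d) \<in> r" using N_above[OF dN] by blast
    have xy: "(x, y) \<in> r" if "y \<in> D" for y
    proof -
      have "(d, y) \<in> r" using d that by blast
      thus ?thesis by (rule rtrans[OF xd])
    qed
    have xx: "(x, x) \<in> r" using xW WV rrefl by blast
    have "is_maximal_chain W r (insert x D)"
    proof (rule mcI)
      show "is_chain W r (insert x D)"
      proof (rule chI)
        show "insert x D \<subseteq> W" using DW xW by blast
        fix a b assume ab: "a \<in> insert x D" "b \<in> insert x D"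
        show "(a, b) \<in> r \<or> (b, a) \<in> r"
        proof (cases "a = x")
          case True thus ?thesis using ab xy xx by blast
        next
          case False
          hence "a \<in> D" using ab by blast
          thus ?thesis using ab xy chD2[OF chDD] by blast
        qed
      qed
      fix E assume E: "is_chain W r E" "insert x D \<subseteq> E"
      have "E \<subseteq> W" using E(1) by (rule chD)
      hence "is_chain (W - {x}) r (E - {x})" using chD2[OF E(1)] by (intro chI) auto
      moreover have "D \<subseteq> E - {x}" using E DW by blast
      ultimately have "E - {x} = D" using mcE[OF D] by blast
      thus "E = insert x D" using E by blast
    qed
    thus ?thesis using dN by blast
  qed
qed

lemma drop_other:
  assumes C: "is_maximal_chain W r C" and xC: "x \<notin> C"
  shows "is_maximal_chain (W - {x}) r C"
proof (rule mcI)
  have ch: "is_chain W r C" using C by (rule mcD)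
  have "C \<subseteq> W" using ch by (rule chD)
  thus "is_chain (W - {x}) r C" using xC chD2[OF ch] by (intro chI) auto
  fix E assume E: "is_chain (W - {x}) r E" "C \<subseteq> E"
  have "E \<subseteq> W - {x}" using E(1) by (rule chD)
  hence "is_chain W r E" using chD2[OF E(1)] by (intro chI) auto
  thus "E = C" using mcE[OF C] E(2) by blast
qed

lemma drop_unique:
  assumes WV: "W \<subseteq> V" and M: "Mn W r = {c}" and C: "is_maximal_chain W r C" and cC: "c \<in> C"
  shows "is_maximal_chain (W - {c}) r (C - {c})"
proof (rule mcI)
  have cw: "(c, w) \<in> r" if "w \<in> W" for w using below_min[OF WV that] M by auto
  have cW: "c \<in> W" using M by (auto simp: Mn_def)
  have cc: "(c, c) \<in> r" using cW WV rrefl by blast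
  have ch: "is_chain W r C" using C by (rule mcD)
  have "C \<subseteq> W" using ch by (rule chD)
  thus "is_chain (W - {c}) r (C - {c})" using chD2[OF ch] by (intro chI) auto
  fix E assume E: "is_chain (W - {c}) r E" "C - {c} \<subseteq> E"
  have EW: "E \<subseteq> W - {c}" using E(1) by (rule chD)
  have "is_chain W r (insert c E)"
  proof (rule chI)
    show "insert c E \<subseteq> W" using EW cW by blast
    fix a b assume ab: "a \<in> insert c E" "b \<in> insert c E"
    show "(a, b) \<in> r \<or> (b, a) \<in> r"
    proof (cases "a = c")
      case True thus ?thesis using ab cw EW cc by blast
    next
      case False
      hence aE: "a \<in> E" using ab by blast
      show ?thesis
      proof (cases "b = c")
        case True thus ?thesis using aE cw EW by blast
      next
        case False thus ?thesis using aE ab chD2[OF E(1)] by blast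
      qed
    qed
  qed
  moreover have "C \<subseteq> insert c E" using E(2) by blast
  ultimately have "insert c E = C" using mcE[OF C] by blast
  moreover have "c \<notin> E" using EW by blast
  ultimately show "E = C - {c}" by blast
qed

lemma extend_mc:
  assumes WV: "W \<subseteq> V" and D: "is_chain W r D"
  shows "\<exists>C. is_maximal_chain W r C \<and> D \<subseteq> C"
proof -
  define F where "F = {E. is_chain W r E \<and> D \<subseteq> E}"
  have finW: "finite W" using WV fin finite_subset by auto
  have "F \<subseteq> Pow W" by (auto simp: F_def is_chain_def)
  hence finF: "finite F" using finW finite_subset by blast
  have DF: "D \<in> F" using D by (simp add: F_def)
  define k where "k = Max (card ` F)"
  have "k \<in> card ` F" unfolding k_def using finF DF by (intro Max_in) auto
  then obtain E where E: "E \<in> F" "card E = k" by blast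
  have Emax: "card E' \<le> card E" if "E' \<in> F" for E'
    using E finF that unfolding k_def by simp
  have "is_maximal_chain W r E"
  proof (rule mcI)
    show "is_chain W r E" using E by (simp add: F_def)
    fix E' assume E': "is_chain W r E'" "E \<subseteq> E'"
    hence "E' \<in> F" using E by (auto simp: F_def)
    hence "card E' \<le> card E" by (rule Emax)
    moreover have "E' \<subseteq> W" using E'(1) by (rule chD)
    hence "finite E'" using finW finite_subset by blast
    ultimately show "E' = E" using E'(2) card_seteq by blast
  qed
  thus ?thesis using E by (auto simp: F_def)
qed


definition anti :: "'a set \<Rightarrow> bool" where
  "anti X \<longleftrightarrow> (\<forall>x\<in>X. \<forall>y\<in>X. x \<noteq> y \<longrightarrow> (x, y) \<notin> r)"

definition cond :: "'a set \<Rightarrow> 'a set \<Rightarrow> 'a set \<Rightarrow> bool" where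
  "cond W A B \<longleftrightarrow> (\<forall>C. is_maximal_chain W r C \<and> C \<inter> A \<noteq> {} \<longrightarrow> C \<inter> B \<noteq> {})"

definition strict :: "'a set \<Rightarrow> 'a set \<Rightarrow> 'a set \<Rightarrow> bool" where
  "strict W A B \<longleftrightarrow> (\<exists>C. is_maximal_chain W r C \<and>
      ((C \<inter> A = {} \<and> C \<inter> B \<noteq> {}) \<or> (\<exists>b1\<in>C \<inter> B. \<exists>b2\<in>C \<inter> B. b1 \<noteq> b2)))"

definition Xp :: "'a set \<Rightarrow> 'a set \<Rightarrow> 'a \<Rightarrow> 'a set" where
  "Xp W X x = (X - {x}) \<union> (if x \<in> X then N W x else {})"

lemma N_sub: "N W x \<subseteq> W - {x}"
  unfolding N_def Mn_def by blast

lemma Xp_sub: "X \<subseteq> W \<Longrightarrow> Xp W X x \<subseteq> W - {x}"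
  unfolding Xp_def using N_sub[of W x] by auto

lemma anti_Xp:
  assumes A: "anti A" and AW: "A \<subseteq> W" and x: "x \<in> Mn W r"
  shows "anti (Xp W A x)"
  unfolding anti_def
proof (intro ballI impI)
  fix a b assume a: "a \<in> Xp W A x" and b: "b \<in> Xp W A x" and ab: "a \<noteq> b"
  have aW: "a \<in> W - {x}" using a Xp_sub[OF AW] by blast
  show "(a, b) \<notin> r"
  proof
    assume abr: "(a, b) \<in> r"
    show False
    proof (cases "b \<in> N W x")
      case True
      hence bm: "b \<in> Mn (W - {x}) r" using N_above by blast
      hence "\<forall>y\<in>W - {x}. (y, b) \<in> r \<longrightarrow> y = b" by (simp add: Mn_def)
      thus False using aW abr ab by blast
    next
      case False
      hence bA: "b \<in> A - {x}" using b by (auto simp: Xp_def split: if_splits)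
      show False
      proof (cases "a \<in> A - {x}")
        case False
        hence True: "a \<in> N W x" and xA: "x \<in> A" using a by (auto simp: Xp_def split: if_splits)
        have "(x, a) \<in> r" using N_above[OF True] by blast
        hence "(x, b) \<in> r" using abr by (rule rtrans)
        thus False using xA bA A by (auto simp: anti_def)
      next
        case True
        thus False using bA A abr ab by (auto simp: anti_def)
      qed
    qed
  qed
qed


lemma ne_del: "finite W \<Longrightarrow> card W \<ge> 2 \<Longrightarrow> W - {x} \<noteq> {}"
proof
  assume "finite W" "card W \<ge> 2" "W - {x} = {}"
  hence "W \<subseteq> {x}" by auto
  hence "card W \<le> card {x}" by (rule card_mono[rotated]) simp
  thus False using \<open>card W \<ge> 2\<close> by simp
qed

lemma cond_step:
  assumes WV: "W \<subseteq> V" and c2: "card W \<ge> 2" and x: "x \<in> Mn W r"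
    and AW: "A \<subseteq> W" and BW: "B \<subseteq> W" and cd: "cond W A B"
  shows "cond (W - {x}) (Xp W A x) (Xp W B x)"
  unfolding cond_def
proof (intro allI impI, elim conjE)
  fix D assume D: "is_maximal_chain (W - {x}) r D" and DA: "D \<inter> Xp W A x \<noteq> {}"
  have finW: "finite W" using WV fin finite_subset by auto
  have WV': "W - {x} \<subseteq> V" using WV by blast
  obtain d where d: "d \<in> D" "\<forall>y\<in>D. (d, y) \<in> r" and dm: "d \<in> Mn (W - {x}) r"
    using mc_bottom[OF WV' ne_del[OF finW c2] D] by blast
  have DW: "D \<subseteq> W - {x}" using mcD[OF D] by (rule chD)
  obtain a where a: "a \<in> D" "a \<in> Xp W A x" using DA by blast
  from lift[OF WV x D d] show "D \<inter> Xp W B x \<noteq> {}"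
  proof (elim disjE conjE)
    assume dM: "d \<in> Mn W r" and DM: "is_maximal_chain W r D"
    have "a \<notin> N W x"
    proof
      assume aN: "a \<in> N W x"
      hence "a \<in> Mn (W - {x}) r" using N_above by blast
      hence "\<forall>y\<in>W - {x}. (y, a) \<in> r \<longrightarrow> y = a" by (simp add: Mn_def)
      hence "d = a" using d a DW by blast
      thus False using aN dM by (simp add: N_def)
    qed
    hence "a \<in> A" using a by (auto simp: Xp_def split: if_splits)
    hence "D \<inter> A \<noteq> {}" using a by blast
    then obtain b where b: "b \<in> D" "b \<in> B" using cd DM by (auto simp: cond_def)
    hence "b \<in> Xp W B x" using DW by (auto simp: Xp_def)
    thus ?thesis using b by blast
  next
    assume dN: "d \<in> N W x" and DM: "is_maximal_chain W r (insert x D)"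
    have "insert x D \<inter> A \<noteq> {}"
    proof (cases "a \<in> A - {x}")
      case True thus ?thesis using a by blast
    next
      case False
      hence "x \<in> A" using a by (auto simp: Xp_def split: if_splits)
      thus ?thesis by blast
    qed
    then obtain b where b: "b \<in> insert x D" "b \<in> B" using cd DM by (auto simp: cond_def)
    show ?thesis
    proof (cases "b = x")
      case True
      hence "d \<in> Xp W B x" using b dN by (auto simp: Xp_def)
      thus ?thesis using d by blast
    next
      case False
      hence "b \<in> D" "b \<in> Xp W B x" using b by (auto simp: Xp_def)
      thus ?thesis by blast
    qed
  qed
qed

lemma strict_step:
  assumes WV: "W \<subseteq> V" and c2: "card W \<ge> 2" and st: "strict W A B"
  shows "\<exists>x\<in>Mn W r. strict (W - {x}) (Xp W A x) (Xp W B x) \<or> (x \<in> B \<and> N W x \<inter> (B - {x}) \<noteq> {})"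
proof -
  have finW: "finite W" using WV fin finite_subset by auto
  have neW: "W \<noteq> {}" using c2 by auto
  obtain C where C: "is_maximal_chain W r C"
    and dis: "(C \<inter> A = {} \<and> C \<inter> B \<noteq> {}) \<or> (\<exists>b1\<in>C \<inter> B. \<exists>b2\<in>C \<inter> B. b1 \<noteq> b2)"
    using st by (auto simp: strict_def)
  obtain c where c: "c \<in> C" "\<forall>y\<in>C. (c, y) \<in> r" and cM: "c \<in> Mn W r"
    using mc_bottom[OF WV neW C] by blast
  have CW: "C \<subseteq> W" using mcD[OF C] by (rule chD)
  show ?thesis
  proof (cases "c \<in> B \<and> N W c \<inter> (B - {c}) \<noteq> {}")
    case True thus ?thesis using cM by blast
  next
    case notS1: False
    show ?thesis
    proof (cases "\<exists>x\<in>Mn W r. x \<noteq> c")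
      case True
      then obtain x where x: "x \<in> Mn W r" "x \<noteq> c" by blast
      have xC: "x \<notin> C"
      proof
        assume "x \<in> C"
        hence "(c, x) \<in> r" using c by blast
        moreover have "\<forall>y\<in>W. (y, x) \<in> r \<longrightarrow> y = x" using x by (simp add: Mn_def)
        ultimately show False using x CW c by blast
      qed
      have C': "is_maximal_chain (W - {x}) r C" by (rule drop_other[OF C xC])
      have noN: "C \<inter> N W x = {}"
      proof (rule ccontr)
        assume "C \<inter> N W x \<noteq> {}"
        then obtain a where a: "a \<in> C" "a \<in> N W x" by blast
        hence "a \<in> Mn (W - {x}) r" using N_above by blast
        hence "\<forall>y\<in>W - {x}. (y, a) \<in> r \<longrightarrow> y = a" by (simp add: Mn_def)
        hence "c = a" using c a CW xC by blast
        thus False using a cM by (simp add: N_def)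
      qed
      have sA: "C \<inter> Xp W A x \<subseteq> C \<inter> A" using noN by (auto simp: Xp_def)
      have sB: "C \<inter> B \<subseteq> C \<inter> Xp W B x" using xC by (auto simp: Xp_def)
      have "strict (W - {x}) (Xp W A x) (Xp W B x)"
        unfolding strict_def
      proof (rule exI[of _ C], rule conjI[OF C'])
        show "(C \<inter> Xp W A x = {} \<and> C \<inter> Xp W B x \<noteq> {}) \<or> (\<exists>b1\<in>C \<inter> Xp W B x. \<exists>b2\<in>C \<inter> Xp W B x. b1 \<noteq> b2)"
          using dis sA sB by blast
      qed
      thus ?thesis using x by blast
    next
      case False
      hence M: "Mn W r = {c}" using cM by blast
      have C': "is_maximal_chain (W - {c}) r (C - {c})" by (rule drop_unique[OF WV M C c(1)])
      have WV': "W - {c} \<subseteq> V" using WV by blast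
      obtain c2 where c2: "c2 \<in> C - {c}" "\<forall>y\<in>C - {c}. (c2, y) \<in> r" and c2m: "c2 \<in> Mn (W - {c}) r"
        using mc_bottom[OF WV' ne_del[OF finW \<open>card W \<ge> 2\<close>] C'] by blast
      have c2N: "c2 \<in> N W c" using c2 c2m M by (auto simp: N_def)
      have "strict (W - {c}) (Xp W A c) (Xp W B c)"
        unfolding strict_def
      proof (rule exI[of _ "C - {c}"], rule conjI[OF C'])
        show "((C - {c}) \<inter> Xp W A c = {} \<and> (C - {c}) \<inter> Xp W B c \<noteq> {}) \<or>
              (\<exists>b1\<in>(C - {c}) \<inter> Xp W B c. \<exists>b2\<in>(C - {c}) \<inter> Xp W B c. b1 \<noteq> b2)"
          using dis
        proof (elim disjE conjE bexE)
          assume CA: "C \<inter> A = {}" and CB: "C \<inter> B \<noteq> {}"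
          have cA: "c \<notin> A" using CA c by blast
          hence XA: "Xp W A c = A - {c}" by (simp add: Xp_def)
          obtain b where b: "b \<in> C" "b \<in> B" using CB by blast
          have "(C - {c}) \<inter> Xp W B c \<noteq> {}"
          proof (cases "b = c")
            case True
            hence "c2 \<in> Xp W B c" using b c2N by (simp add: Xp_def)
            thus ?thesis using c2 by blast
          next
            case False thus ?thesis using b by (auto simp: Xp_def)
          qed
          moreover have "(C - {c}) \<inter> Xp W A c = {}" using CA XA by blast
          ultimately show ?thesis by blast
        next
          fix b1 b2 assume b1: "b1 \<in> C \<inter> B" and b2: "b2 \<in> C \<inter> B" and ne: "b1 \<noteq> b2"
          have key: "\<exists>u\<in>(C - {c}) \<inter> Xp W B c. \<exists>v\<in>(C - {c}) \<inter> Xp W B c. u \<noteq> v"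
            if u: "u \<in> C \<inter> B" and v: "v \<in> C \<inter> B" and uv: "u \<noteq> v" and uc: "u = c" for u v
          proof -
            have vc: "v \<noteq> c" using uv uc by blast
            have vX: "v \<in> (C - {c}) \<inter> Xp W B c" using v vc by (auto simp: Xp_def)
            have cB: "c \<in> B" using u uc by blast
            have c2X: "c2 \<in> (C - {c}) \<inter> Xp W B c" using c2 c2N cB by (auto simp: Xp_def)
            have "c2 \<noteq> v"
            proof
              assume "c2 = v"
              hence "N W c \<inter> (B - {c}) \<noteq> {}" using c2N v vc by blast
              thus False using notS1 cB by blast
            qed
            thus ?thesis using vX c2X by blast
          qed
          show ?thesis
          proof (cases "b1 = c")
            case True thus ?thesis using key[OF b1 b2 ne] by blast
          next
            case False
            show ?thesis
            proof (cases "b2 = c")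
              case True thus ?thesis using key[OF b2 b1 ne[symmetric]] by blast
            next
              case False2: False
              have "b1 \<in> (C - {c}) \<inter> Xp W B c" "b2 \<in> (C - {c}) \<inter> Xp W B c"
                using b1 b2 False False2 by (auto simp: Xp_def)
              thus ?thesis using ne by blast
            qed
          qed
        qed
      qed
      thus ?thesis using cM by blast
    qed
  qed
qed


lemma T_fin: "W \<subseteq> V \<Longrightarrow> X \<subseteq> W \<Longrightarrow> finite X"
  by (rule finite_subset[OF _ fin]) blast

lemma N_fin: "W \<subseteq> V \<Longrightarrow> finite (N W x)"
  by (rule finite_subset[OF _ fin]) (use N_sub[of W x] in blast)

lemma eqA_term:
  assumes WV: "W \<subseteq> V" and AW: "A \<subseteq> W" and A: "anti A"
  shows "T (W - {m}) (A - {m}) + (if m \<in> A then T (W - {m}) (N W m) else 0) = T (W - {m}) (Xp W A m)"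
proof (cases "m \<in> A")
  case True
  have dj: "(A - {m}) \<inter> N W m = {}"
  proof (rule ccontr)
    assume "(A - {m}) \<inter> N W m \<noteq> {}"
    then obtain n where n: "n \<in> A" "n \<noteq> m" "n \<in> N W m" by blast
    have "(m, n) \<in> r" using N_above[OF n(3)] by blast
    thus False using A True n by (auto simp: anti_def)
  qed
  have f1: "finite (A - {m})" by (rule T_fin[OF WV]) (use AW in blast)
  show ?thesis using True dj f1 N_fin[OF WV]
    unfolding T_def Xp_def by (simp add: sum.union_disjoint)
next
  case False thus ?thesis by (simp add: Xp_def)
qed

lemma geB_term:
  assumes WV: "W \<subseteq> V" and BW: "B \<subseteq> W"
  shows "T (W - {m}) (Xp W B m) + (if m \<in> B \<and> N W m \<inter> (B - {m}) \<noteq> {} then 1 else 0)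
       \<le> T (W - {m}) (B - {m}) + (if m \<in> B then T (W - {m}) (N W m) else 0)"
proof (cases "m \<in> B")
  case True
  have f1: "finite (B - {m})" by (rule T_fin[OF WV]) (use BW in blast)
  have f2: "finite (N W m)" using N_fin[OF WV] .
  have ui: "T (W - {m}) ((B - {m}) \<union> N W m) + T (W - {m}) ((B - {m}) \<inter> N W m)
        = T (W - {m}) (B - {m}) + T (W - {m}) (N W m)"
    unfolding T_def by (rule sum.union_inter[OF f1 f2])
  have "(if N W m \<inter> (B - {m}) \<noteq> {} then 1 else 0) \<le> T (W - {m}) ((B - {m}) \<inter> N W m)"
  proof (cases "N W m \<inter> (B - {m}) = {}")
    case False
    then obtain y where y: "y \<in> (B - {m}) \<inter> N W m" by blast
    have "1 \<le> num_linext (W - {m} - {y}) r" by (rule pos) (use WV in blast)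
    also have "\<dots> \<le> T (W - {m}) ((B - {m}) \<inter> N W m)"
      unfolding T_def using y f1 by (intro member_le_sum) auto
    finally show ?thesis using False by simp
  qed simp
  thus ?thesis using True ui by (simp add: Xp_def)
next
  case False thus ?thesis by (simp add: Xp_def)
qed

lemma gen:
  "W \<subseteq> V \<Longrightarrow> A \<subseteq> W \<Longrightarrow> B \<subseteq> W \<Longrightarrow> anti A \<Longrightarrow> cond W A B \<Longrightarrow>
   T W A + (if strict W A B then 1 else 0) \<le> T W B"
proof (induction "card W" arbitrary: W A B rule: less_induct)
  case less
  have WV: "W \<subseteq> V" and AW: "A \<subseteq> W" and BW: "B \<subseteq> W" and A: "anti A" and cd: "cond W A B"
    using less.prems by auto
  have finW: "finite W" using WV fin finite_subset by auto
  show ?case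
  proof (cases "card W \<ge> 2")
    case False
    hence "card W = 0 \<or> card W = 1" by auto
    hence "W = {} \<or> (\<exists>w. W = {w})" using finW by (auto simp: card_1_singleton_iff)
    thus ?thesis
    proof (elim disjE exE)
      assume W: "W = {}"
      hence "A = {}" "B = {}" using AW BW by auto
      thus ?thesis by (simp add: T_def strict_def)
    next
      fix w assume W: "W = {w}"
      have Tw: "T W X = (if w \<in> X then 1 else 0)" if "X \<subseteq> W" for X
      proof -
        have "X = {} \<or> X = {w}" using that W by auto
        thus ?thesis using W by (auto simp: T_def num_linext_empty)
      qed
      have mcw: "is_maximal_chain W r {w}"
      proof (rule mcI)
        show "is_chain W r {w}" using W WV rrefl by (intro chI) auto
        fix E assume "is_chain W r E" "{w} \<subseteq> E"
        moreover have "E \<subseteq> W" using \<open>is_chain W r E\<close> by (rule chD)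
        ultimately show "E = {w}" using W by blast
      qed
      have AB: "w \<in> A \<Longrightarrow> w \<in> B" using cd mcw by (auto simp: cond_def)
      have "strict W A B \<Longrightarrow> w \<in> B \<and> w \<notin> A"
      proof -
        assume "strict W A B"
        then obtain C where C: "is_maximal_chain W r C"
          and dis: "(C \<inter> A = {} \<and> C \<inter> B \<noteq> {}) \<or> (\<exists>b1\<in>C \<inter> B. \<exists>b2\<in>C \<inter> B. b1 \<noteq> b2)"
          by (auto simp: strict_def)
        have "C \<subseteq> W" using mcD[OF C] by (rule chD)
        thus ?thesis using dis W by blast
      qed
      thus ?thesis using Tw[OF AW] Tw[OF BW] AB by auto
    qed
  next
    case True
    define M where "M = Mn W r"
    have finM: "finite M" using finW by (simp add: M_def Mn_def)
    define bon where "bon x = (if strict (W - {x}) (Xp W A x) (Xp W B x) \<or> (x \<in> B \<and> N W x \<inter> (B - {x}) \<noteq> {}) then 1 else (0::nat))" for x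
    have step: "T (W - {x}) (A - {x}) + (if x \<in> A then T (W - {x}) (N W x) else 0) + bon x
        \<le> T (W - {x}) (B - {x}) + (if x \<in> B then T (W - {x}) (N W x) else 0)" if x: "x \<in> M" for x
    proof -
      have xm: "x \<in> Mn W r" using x by (simp add: M_def)
      have xW: "x \<in> W" using xm by (simp add: Mn_def)
      have IH: "T (W - {x}) (Xp W A x) + (if strict (W - {x}) (Xp W A x) (Xp W B x) then 1 else 0)
             \<le> T (W - {x}) (Xp W B x)"
      proof (rule less.hyps)
        show "card (W - {x}) < card W" using finW xW by (rule card_Diff1_less)
        show "W - {x} \<subseteq> V" using WV by blast
        show "Xp W A x \<subseteq> W - {x}" using AW by (rule Xp_sub)
        show "Xp W B x \<subseteq> W - {x}" using BW by (rule Xp_sub)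
        show "anti (Xp W A x)" by (rule anti_Xp[OF A AW xm])
        show "cond (W - {x}) (Xp W A x) (Xp W B x)" by (rule cond_step[OF WV True xm AW BW cd])
      qed
      have eA: "T (W - {x}) (A - {x}) + (if x \<in> A then T (W - {x}) (N W x) else 0) = T (W - {x}) (Xp W A x)"
        by (rule eqA_term[OF WV AW A])
      have gB: "T (W - {x}) (Xp W B x) + (if x \<in> B \<and> N W x \<inter> (B - {x}) \<noteq> {} then 1 else 0)
       \<le> T (W - {x}) (B - {x}) + (if x \<in> B then T (W - {x}) (N W x) else 0)"
        by (rule geB_term[OF WV BW])
      show ?thesis using IH eA gB unfolding bon_def by (auto split: if_splits)
    qed
    have "T W A + (\<Sum>x\<in>M. bon x)
        = (\<Sum>x\<in>M. T (W - {x}) (A - {x}) + (if x \<in> A then T (W - {x}) (N W x) else 0) + bon x)"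
      using decomp[OF WV True AW] by (simp add: M_def sum.distrib)
    also have "\<dots> \<le> (\<Sum>x\<in>M. T (W - {x}) (B - {x}) + (if x \<in> B then T (W - {x}) (N W x) else 0))"
      by (rule sum_mono) (rule step)
    also have "\<dots> = T W B" using decomp[OF WV True BW] by (simp add: M_def)
    finally have main: "T W A + (\<Sum>x\<in>M. bon x) \<le> T W B" .
    have "(if strict W A B then 1 else 0) \<le> (\<Sum>x\<in>M. bon x)"
    proof (cases "strict W A B")
      case True
      obtain x where x: "x \<in> Mn W r" and
        "strict (W - {x}) (Xp W A x) (Xp W B x) \<or> (x \<in> B \<and> N W x \<inter> (B - {x}) \<noteq> {})"
        using strict_step[OF WV \<open>card W \<ge> 2\<close> True] by blast
      hence "x \<in> M" "bon x = 1" unfolding M_def bon_def by auto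
      hence "1 \<le> (\<Sum>x\<in>M. bon x)" using member_le_sum[OF \<open>x \<in> M\<close> _ finM, of bon] by simp
      thus ?thesis using True by simp
    qed simp
    thus ?thesis using main by linarith
  qed
qed


lemma main:
  shows "(\<forall>A. is_antichain V r A \<longrightarrow>
            num_linext V r \<ge> (\<Sum>v\<in>A. num_linext (V - {v}) (del_pt r V v)))
       \<and> (\<forall>S. is_cutset V r S \<longrightarrow>
            num_linext V r \<le> (\<Sum>v\<in>S. num_linext (V - {v}) (del_pt r V v)))
       \<and> (\<forall>I. (is_cutset V r I \<or> is_antichain V r I) \<longrightarrow>
            (num_linext V r = (\<Sum>v\<in>I. num_linext (V - {v}) (del_pt r V v))
              \<longleftrightarrow> is_cutset V r I \<and> is_antichain V r I))"
proof -
  have sumeq: "(\<Sum>v\<in>X. num_linext (V - {v}) (del_pt r V v)) = T V X" for X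
    unfolding T_def del_pt_def num_linext_def linext_Restr by simp
  have eV: "num_linext V r = T V (Mn V r)" if "V \<noteq> {}"
    unfolding T_def by (rule num_linext_rec[OF fin that])
  have VV: "V \<subseteq> V" by simp
  have antiM: "anti (Mn V r)" unfolding anti_def Mn_def using rsub by blast
  have MV: "Mn V r \<subseteq> V" by (auto simp: Mn_def)
  have condM: "cond V A (Mn V r)" if "V \<noteq> {}" for A
    unfolding cond_def using mc_bottom[OF VV that] by blast
  have ac: "is_antichain V r A \<longleftrightarrow> A \<subseteq> V \<and> anti A" for A
    by (simp add: is_antichain_def anti_def)
  have mc0: "is_maximal_chain {} r {}"
    by (rule mcI) (auto simp: is_chain_def)
  have cutne: "V \<noteq> {}" if "is_cutset V r S" for S
  proof
    assume "V = {}"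
    thus False using that mc0 by (auto simp: is_cutset_def)
  qed
  have condS: "cond V (Mn V r) S" if "is_cutset V r S" for S
    using that by (auto simp: cond_def is_cutset_def)
  have cutsub: "S \<subseteq> V" if "is_cutset V r S" for S using that by (simp add: is_cutset_def)
  have P1: "T V A \<le> num_linext V r" if "is_antichain V r A" for A
  proof (cases "V = {}")
    case True
    hence "A = {}" using that by (auto simp: is_antichain_def)
    thus ?thesis by (simp add: T_def)
  next
    case False
    have "T V A + (if strict V A (Mn V r) then 1 else 0) \<le> T V (Mn V r)"
      using gen[OF VV _ MV _ condM[OF False]] that ac by blast
    thus ?thesis using eV[OF False] by simp
  qed
  have P2: "num_linext V r \<le> T V S" if "is_cutset V r S" for S
  proof -
    have "T V (Mn V r) + (if strict V (Mn V r) S then 1 else 0) \<le> T V S"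
      by (rule gen[OF VV MV cutsub[OF that] antiM condS[OF that]])
    thus ?thesis using eV[OF cutne[OF that]] by simp
  qed
  have P3a: "num_linext V r < T V S" if cs: "is_cutset V r S" and na: "\<not> is_antichain V r S" for S
  proof -
    obtain x y where xy: "x \<in> S" "y \<in> S" "x \<noteq> y" "(x, y) \<in> r"
      using na cutsub[OF cs] by (auto simp: is_antichain_def)
    have "is_chain V r {x, y}"
      using xy cutsub[OF cs] rrefl by (intro chI) auto
    then obtain C where C: "is_maximal_chain V r C" "{x, y} \<subseteq> C" using extend_mc[OF VV] by blast
    have st: "strict V (Mn V r) S" unfolding strict_def using C xy by blast
    have "T V (Mn V r) + (if strict V (Mn V r) S then 1 else 0) \<le> T V S"
      by (rule gen[OF VV MV cutsub[OF cs] antiM condS[OF cs]])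
    thus ?thesis using eV[OF cutne[OF cs]] st by simp
  qed
  have P3b: "T V A < num_linext V r" if an: "is_antichain V r A" and nc: "\<not> is_cutset V r A" for A
  proof -
    have AV: "A \<subseteq> V" using an by (simp add: is_antichain_def)
    obtain C where C: "is_maximal_chain V r C" "A \<inter> C = {}" using nc AV by (auto simp: is_cutset_def)
    show ?thesis
    proof (cases "V = {}")
      case True
      hence "A = {}" "V = {}" using AV by auto
      thus ?thesis by (simp add: T_def num_linext_empty)
    next
      case False
      obtain c where "c \<in> C" "c \<in> Mn V r" using mc_bottom[OF VV False C(1)] by blast
      hence st: "strict V A (Mn V r)" unfolding strict_def using C by blast
      have "T V A + (if strict V A (Mn V r) then 1 else 0) \<le> T V (Mn V r)"
        using gen[OF VV _ MV _ condM[OF False]] an ac by blast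
      thus ?thesis using eV[OF False] st by simp
    qed
  qed
  show ?thesis
    unfolding sumeq
  proof (intro conjI allI impI)
    fix I assume h: "is_cutset V r I \<or> is_antichain V r I"
    show "num_linext V r = T V I \<longleftrightarrow> is_cutset V r I \<and> is_antichain V r I"
    proof
      assume eq: "num_linext V r = T V I"
      show "is_cutset V r I \<and> is_antichain V r I"
      proof (cases "is_cutset V r I")
        case True
        have "is_antichain V r I"
        proof (rule ccontr)
          assume "\<not> is_antichain V r I"
          thus False using P3a[OF True] eq by simp
        qed
        thus ?thesis using True by blast
      next
        case False
        hence an: "is_antichain V r I" using h by blast
        thus ?thesis using P3b[OF an False] eq by simp
      qed
    next
      assume "is_cutset V r I \<and> is_antichain V r I"
      thus "num_linext V r = T V I" using P1 P2 le_antisym by blast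
    qed
  qed (use P1 P2 in auto)
qed

end

theorem corollary3p10:
  fixes V :: "'a set" and r :: "'a rel"
  assumes "finite V" and "partial_order_on V r"
  shows "(\<forall>A. is_antichain V r A \<longrightarrow>
            num_linext V r \<ge> (\<Sum>v\<in>A. num_linext (V - {v}) (del_pt r V v)))
       \<and> (\<forall>S. is_cutset V r S \<longrightarrow>
            num_linext V r \<le> (\<Sum>v\<in>S. num_linext (V - {v}) (del_pt r V v)))
       \<and> (\<forall>I. (is_cutset V r I \<or> is_antichain V r I) \<longrightarrow>
            (num_linext V r = (\<Sum>v\<in>I. num_linext (V - {v}) (del_pt r V v))
              \<longleftrightarrow> is_cutset V r I \<and> is_antichain V r I))"
  by (rule main[OF assms])

end
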